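(* There is no rigid configuration in $\mathbb{RP}^2$ consisting of fewer than 6 points (counted with multiplicity). Up to projective transformations, there are exactly two rigid configurations of 6 points (counted with multiplicity) in $\mathbb{RP}^2$: (i) three non-collinear points, each of multiplicity $2$; (ii) six distinct points, projectively equivalent to $\{(0:0:1),(1:0:1),(0:1:1),(1:1:1),(1:0:0),(0:1:0)\}$ (six points lying on four lines, each line containing three of the points and each point lying on two of the lines).
   Context: A configuration in $\mathbb{RP}^\ell$ is a finite multiset of points. Its span $\operatorname{span}(A)$ is the smallest projective subspace containing $A$; $A$ is non-degenerate if $\operatorname{span}(A)=\mathbb{RP}^\ell$. $\mathcal H(A)$ denotes the set of all projective hyperplanes of the form $\operatorname{span}(A')$ for some sub-multiset $A'\subseteq A$. For a non-degenerate configuration $A$, a point $a\in A$ is locked if it lies on $\ell$ distinct hyperplanes in $\mathcal H(A\setminus\{a\})$ (where $A\setminus\{a\}$ removes one copy of $a$), and free otherwise. A non-degenerate configuration $A$ is rigid if every point of $A$ is locked. *)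

theory Defs
  imports "HOL-Analysis.Analysis" "HOL-Library.Multiset"
begin

text \<open>Real projective space RP^l is modelled as the set of 1-dimensional linear
subspaces of a real Euclidean space 'a with DIM('a) = l + 1 (for RP^2: real^3).
A configuration is a multiset of such points.\<close>

definition proj_points :: "'a::euclidean_space set set" where
  "proj_points = {span {v} | v. v \<noteq> 0}"

definition pspan :: "'a::euclidean_space set multiset \<Rightarrow> 'a set" where
  "pspan A = span (\<Union> (set_mset A))"

definition nondegenerate :: "'a::euclidean_space set multiset \<Rightarrow> bool" where
  "nondegenerate A \<longleftrightarrow> pspan A = UNIV"

definition hyperplanes_of :: "'a::euclidean_space set multiset \<Rightarrow> 'a set set" where
  "hyperplanes_of A = {pspan A' | A'. A' \<subseteq># A \<and> dim (pspan A') = DIM('a) - 1}"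

text \<open>l = DIM('a) - 1 is the projective dimension.\<close>
definition locked :: "'a::euclidean_space set multiset \<Rightarrow> 'a set \<Rightarrow> bool" where
  "locked A a \<longleftrightarrow> card {H \<in> hyperplanes_of (A - {#a#}). a \<subseteq> H} \<ge> DIM('a) - 1"

definition rigid :: "'a::euclidean_space set multiset \<Rightarrow> bool" where
  "rigid A \<longleftrightarrow> nondegenerate A \<and> (\<forall>a \<in># A. locked A a)"

definition proj_equiv :: "'a::euclidean_space set multiset \<Rightarrow> 'a set multiset \<Rightarrow> bool" where
  "proj_equiv A B \<longleftrightarrow> (\<exists>f. linear f \<and> bij f \<and> image_mset (\<lambda>p. f ` p) A = B)"

definition double_triangle :: "(real^3) set multiset \<Rightarrow> bool" where
  "double_triangle A \<longleftrightarrow> (\<exists>p q r. p \<in> proj_points \<and> q \<in> proj_points \<and> r \<in> proj_points \<and>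
       nondegenerate {#p, q, r#} \<and> A = {#p, p, q, q, r, r#})"

definition six_std :: "(real^3) set multiset" where
  "six_std = image_mset (\<lambda>v. span {v})
     {# vector [0,0,1], vector [1,0,1], vector [0,1,1], vector [1,1,1],
        vector [1,0,0], vector [0,1,0] #}"

end

theory Submission
  imports Defs
begin


type_synonym v3 = "real^3"

lemma span_span_Un: "span (span A \<union> span B) = span (A \<union> B)"
proof
  show "span (span A \<union> span B) \<subseteq> span (A \<union> B)"
    by (metis span_minimal Un_least span_mono sup_ge1 sup_ge2 subspace_span)
  show "span (A \<union> B) \<subseteq> span (span A \<union> span B)"
    by (intro span_mono) (auto intro: span_base)
qed

definition pline :: "v3 set \<Rightarrow> v3 set \<Rightarrow> v3 set" where
  "pline p q = span (p \<union> q)"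

lemma ln_vec: "pline (span {v}) (span {w}) = span {v, w}"
  unfolding pline_def span_span_Un by (simp add: insert_commute)

lemma ln_sym: "pline p q = pline q p"
  unfolding pline_def by (simp add: Un_commute)

lemma pt_obtain:
  assumes "p \<in> proj_points" obtains v where "v \<noteq> 0" "p = span {v}"
  using assms unfolding proj_points_def by auto

lemma pt_subspace: "p \<in> proj_points \<Longrightarrow> subspace p"
  by (metis pt_obtain subspace_span)

lemma pt_dim: "p \<in> proj_points \<Longrightarrow> dim p = 1"
  by (metis pt_obtain dim_span dim_singleton)

lemma subspace_ln: "subspace (pline p q)"
  unfolding pline_def by simp

lemma ln_sub1: "p \<subseteq> pline p q" and ln_sub2: "q \<subseteq> pline p q"
  unfolding pline_def by (auto intro: span_base)

lemma pt_ne_vec: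
  fixes v w :: v3
  assumes "span {v} \<noteq> span {w}" "w \<noteq> 0"
  shows "w \<notin> span {v}"
proof
  assume "w \<in> span {v}"
  hence sub: "span {w} \<subseteq> span {v}" by (simp add: span_minimal)
  have "dim {v} \<le> 1" by (simp add: dim_singleton)
  hence "dim (span {v}) \<le> dim (span {w})" using assms by simp
  hence "span (span {w}) = span (span {v})" using dim_eq_span[OF sub] by blast
  thus False using assms by (metis span_span)
qed

lemma dim_ln:
  assumes "p \<in> proj_points" "q \<in> proj_points" "p \<noteq> q"
  shows "dim (pline p q) = 2"
proof -
  obtain v where v: "v \<noteq> 0" "p = span {v}" using assms(1) by (rule pt_obtain)
  obtain w where w: "w \<noteq> 0" "q = span {w}" using assms(2) by (rule pt_obtain)
  have "w \<notin> span {v}" using pt_ne_vec assms v w by blast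
  hence "dim (insert w {v}) = 2" using v by (simp add: dim_insert)
  thus ?thesis using v w by (simp add: ln_vec insert_commute)
qed

lemma dim_ln_le:
  assumes "p \<in> proj_points" "q \<in> proj_points"
  shows "dim (pline p q) \<le> 2"
proof -
  obtain v where v: "v \<noteq> 0" "p = span {v}" using assms(1) by (rule pt_obtain)
  obtain w where w: "w \<noteq> 0" "q = span {w}" using assms(2) by (rule pt_obtain)
  have "dim (span {v, w}) \<le> card {v, w}" by (rule dim_le_card) auto
  also have "\<dots> \<le> 2" by (simp add: card_insert_if)
  finally show ?thesis using v w by (simp add: ln_vec)
qed

lemma line_eq:
  assumes "subspace H" "dim H \<le> 2" "p \<in> proj_points" "q \<in> proj_points" "p \<noteq> q"
    "p \<subseteq> H" "q \<subseteq> H"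
  shows "H = pline p q"
proof -
  have sub: "pline p q \<subseteq> H" unfolding pline_def using assms by (simp add: span_minimal)
  have "dim H \<le> dim (pline p q)" using dim_ln assms by simp
  hence "span (pline p q) = span H" using dim_eq_span[OF sub] by blast
  thus ?thesis using assms(1) subspace_ln by (metis span_eq_iff)
qed

lemma two_lines:
  assumes "p \<in> proj_points" "q \<in> proj_points" "p \<noteq> q"
    "r \<in> proj_points" "s \<in> proj_points" "t \<in> proj_points" "u \<in> proj_points"
    "p \<subseteq> pline r s" "q \<subseteq> pline r s" "p \<subseteq> pline t u" "q \<subseteq> pline t u"
  shows "pline r s = pline t u"
  using line_eq[OF subspace_ln dim_ln_le[OF assms(4,5)] assms(1-3,8,9)]
    line_eq[OF subspace_ln dim_ln_le[OF assms(6,7)] assms(1-3,10,11)] by simp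

lemma ln_exch:
  assumes "p \<in> proj_points" "q \<in> proj_points" "r \<in> proj_points" "r \<subseteq> pline p q" "r \<noteq> p"
  shows "pline p r = pline p q"
  using line_eq[OF subspace_ln dim_ln_le[OF assms(1,2)] assms(1,3) assms(5)[symmetric] ln_sub1 assms(4)]
  by simp

lemma nondeg_not_in:
  fixes A :: "v3 set multiset"
  assumes "nondegenerate A" "subspace H" "dim H \<le> 2" "\<forall>x\<in>#A. x \<subseteq> H"
  shows False
proof -
  have "pspan A \<subseteq> H" unfolding pspan_def using assms by (intro span_minimal) auto
  hence "(UNIV :: v3 set) \<subseteq> H" using assms(1) unfolding nondegenerate_def by simp
  hence "dim (UNIV :: v3 set) \<le> dim H" by (rule dim_subset)
  thus False using assms(3) by simp
qed

lemma dim_hyp: "H \<in> hyperplanes_of (B :: v3 set multiset) \<Longrightarrow> dim H = 2"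
  unfolding hyperplanes_of_def by auto

lemma hyp_ln:
  assumes "set_mset B \<subseteq> proj_points" "H \<in> hyperplanes_of B"
  shows "\<exists>p q. p \<in># B \<and> q \<in># B \<and> p \<noteq> q \<and> H = pline p q"
proof -
  obtain A' where A': "A' \<subseteq># B" "H = pspan A'" "dim H = 2"
    using assms(2) unfolding hyperplanes_of_def by auto
  have AP: "set_mset A' \<subseteq> proj_points" using A'(1) assms(1)
    by (meson mset_subset_eqD subset_iff)
  show ?thesis
  proof (cases "\<exists>p\<in>#A'. \<exists>q\<in>#A'. p \<noteq> q")
    case True
    then obtain p q where pq: "p \<in># A'" "q \<in># A'" "p \<noteq> q" by blast
    have "H = pline p q"
      by (rule line_eq) (use A' AP pq in \<open>auto simp: pspan_def intro: span_base\<close>)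
    thus ?thesis using pq A'(1) by (blast dest: mset_subset_eqD)
  next
    case False
    hence "set_mset A' = {} \<or> (\<exists>p. set_mset A' = {p})" by blast
    then show ?thesis
    proof
      assume "set_mset A' = {}" thus ?thesis using A' by (simp add: pspan_def)
    next
      assume "\<exists>p. set_mset A' = {p}"
      then obtain p where "set_mset A' = {p}" by blast
      hence "H = p" "p \<in> proj_points" using A' AP pt_subspace
        by (auto simp: pspan_def span_eq_iff)
      thus ?thesis using A' pt_dim by force
    qed
  qed
qed




lemma locked_simple:
  assumes "set_mset A \<subseteq> proj_points" "count A x = 1" "locked A x"
  shows "\<exists>p q r s. p \<in># A \<and> q \<in># A \<and> r \<in># A \<and> s \<in># A \<and> p \<noteq> x \<and> q \<noteq> x \<and> r \<noteq> x \<and> s \<noteq> x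
     \<and> p \<noteq> q \<and> r \<noteq> s \<and> x \<subseteq> pline p q \<and> x \<subseteq> pline r s \<and> pline p q \<noteq> pline r s"
proof -
  let ?X = "{H \<in> hyperplanes_of (A - {#x#}). x \<subseteq> H}"
  have c2: "2 \<le> card ?X" using assms(3) unfolding locked_def by simp
  hence fin: "finite ?X" using card.infinite by force
  have "\<not> card ?X \<le> Suc 0" using c2 by simp
  then obtain H1 H2 where H: "H1 \<in> ?X" "H2 \<in> ?X" "H1 \<noteq> H2"
    using card_le_Suc0_iff_eq[OF fin] by blast
  have sub: "set_mset (A - {#x#}) \<subseteq> proj_points" using assms(1)
    by (auto dest: in_diffD)
  have mem: "y \<in># A \<and> y \<noteq> x" if "y \<in># A - {#x#}" for y
  proof
    show "y \<in># A" using that by (rule in_diffD)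
    show "y \<noteq> x"
    proof
      assume "y = x"
      thus False using that assms(2) in_diff_count[of y A "{#x#}"] by simp
    qed
  qed
  have h12: "H1 \<in> hyperplanes_of (A - {#x#})" "H2 \<in> hyperplanes_of (A - {#x#})" using H by simp_all
  from hyp_ln[OF sub h12(1)] obtain p q where pq: "p \<in># A - {#x#}" "q \<in># A - {#x#}" "p \<noteq> q" "H1 = pline p q"
    by (elim exE conjE)
  from hyp_ln[OF sub h12(2)] obtain r s where rs: "r \<in># A - {#x#}" "s \<in># A - {#x#}" "r \<noteq> s" "H2 = pline r s"
    by (elim exE conjE)
  show ?thesis
    apply (rule exI[of _ p], rule exI[of _ q], rule exI[of _ r], rule exI[of _ s])
    using pq rs mem[of p] mem[of q] mem[of r] mem[of s] H by auto
qed

lemma hyp_finite: "finite (hyperplanes_of (M :: v3 set multiset))"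
proof -
  have "hyperplanes_of M \<subseteq> (\<lambda>S. span (\<Union> S)) ` Pow (set_mset M)"
    unfolding hyperplanes_of_def pspan_def
    by (auto intro!: imageI dest: mset_subset_eqD)
  thus ?thesis by (rule finite_subset) simp
qed


lemma locked_intro:
  assumes "b \<in> proj_points" "c \<in> proj_points" "d \<in> proj_points" "e \<in> proj_points"
    "b \<in># A - {#a#}" "c \<in># A - {#a#}" "d \<in># A - {#a#}" "e \<in># A - {#a#}"
    "b \<noteq> c" "d \<noteq> e" "a \<subseteq> pline b c" "a \<subseteq> pline d e" "pline b c \<noteq> pline d e"
  shows "locked A a"
proof -
  have hyp: "pline u w \<in> hyperplanes_of (A - {#a#})"
    if "u \<in> proj_points" "w \<in> proj_points" "u \<in># A - {#a#}" "w \<in># A - {#a#}" "u \<noteq> w" for u w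
  proof -
    have "{#u, w#} \<subseteq># A - {#a#}" using that
      by (simp add: insert_subset_eq_iff in_diff_count)
    moreover have "pspan {#u, w#} = pline u w" by (simp add: pspan_def pline_def)
    ultimately show ?thesis unfolding hyperplanes_of_def using dim_ln[OF that(1,2,5)]
      by (intro CollectI exI[of _ "{#u, w#}"]) simp
  qed
  let ?X = "{H \<in> hyperplanes_of (A - {#a#}). a \<subseteq> H}"
  have "{pline b c, pline d e} \<subseteq> ?X" using hyp assms by auto
  hence "card {pline b c, pline d e} \<le> card ?X"
    by (rule card_mono[rotated]) (simp add: hyp_finite)
  thus ?thesis unfolding locked_def using assms(13) by simp
qed


lemma pt_sub: "span {v} \<subseteq> span T \<longleftrightarrow> v \<in> span T"
proof
  assume "span {v} \<subseteq> span T" thus "v \<in> span T" using span_base[of v "{v}"] by blast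
next
  assume "v \<in> span T" thus "span {v} \<subseteq> span T" by (simp add: span_minimal)
qed



lemma three_basis:
  fixes u v w :: v3
  assumes "u \<noteq> 0" "v \<noteq> 0" "span {u} \<noteq> span {v}" "\<not> span {w} \<subseteq> span {u, v}"
  shows "span {u, v, w} = UNIV"
proof -
  have "u \<notin> span {v}" using pt_ne_vec[of v u] assms by auto
  hence d2: "dim {u, v} = 2" using assms by (simp add: dim_insert)
  have "w \<notin> span {u, v}" using assms(4) pt_sub by blast
  hence "dim (insert w {u, v}) = 3" using d2 by (simp add: dim_insert)
  hence "dim {u, v, w} = DIM(v3)" by (simp add: insert_commute)
  thus ?thesis using dim_eq_full by blast
qed

lemma basis_notin:
  fixes x y z :: v3
  assumes "span {x, y, z} = UNIV"
  shows "x \<notin> span {y, z}"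
proof
  assume "x \<in> span {y, z}"
  hence "span {x, y, z} = span {y, z}" by (simp add: span_redundant)
  hence "UNIV \<subseteq> span {y, z}" using assms by simp
  hence "dim (UNIV :: v3 set) \<le> card {y, z}"
    using dim_le_card[of "UNIV :: v3 set" "{y, z}"] by blast
  also have "\<dots> \<le> 2" by (simp add: card_insert_if)
  finally have "dim (UNIV :: v3 set) \<le> 2" .
  thus False by simp
qed
definition cv :: "v3 \<Rightarrow> v3 \<Rightarrow> v3 \<Rightarrow> real \<Rightarrow> real \<Rightarrow> real \<Rightarrow> v3" where
  "cv x y z a b c = a *\<^sub>R x + b *\<^sub>R y + c *\<^sub>R z"

lemma cv_zero_coeff:
  fixes x y z :: v3
  assumes "span {x, y, z} = UNIV" "a *\<^sub>R x + b *\<^sub>R y + c *\<^sub>R z = 0"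
  shows "a = 0"
proof (rule ccontr)
  assume a: "a \<noteq> 0"
  have "a *\<^sub>R x + (b *\<^sub>R y + c *\<^sub>R z) = 0" using assms(2) by (simp add: add.assoc)
  hence "a *\<^sub>R x = - (b *\<^sub>R y + c *\<^sub>R z)" by (simp only: eq_neg_iff_add_eq_0)
  moreover have "- (b *\<^sub>R y + c *\<^sub>R z) \<in> span {y, z}"
    by (intro span_neg span_add span_scale span_base) auto
  ultimately have "(1/a) *\<^sub>R (a *\<^sub>R x) \<in> span {y, z}" by (metis span_scale)
  hence "x \<in> span {y, z}" using a by simp
  thus False using basis_notin[OF assms(1)] by simp
qed

lemma cv_inj:
  fixes x y z :: v3
  assumes "span {x, y, z} = UNIV"
  shows "cv x y z a b c = cv x y z a' b' c' \<longleftrightarrow> a = a' \<and> b = b' \<and> c = c'"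
proof
  assume h: "cv x y z a b c = cv x y z a' b' c'"
  hence e: "(a - a') *\<^sub>R x + (b - b') *\<^sub>R y + (c - c') *\<^sub>R z = 0"
    unfolding cv_def by (simp add: algebra_simps)
  have "{y, x, z} = {x, y, z}" "{z, x, y} = {x, y, z}" by auto
  hence b2: "span {y, x, z} = UNIV" "span {z, x, y} = UNIV" using assms by metis+
  have e2: "(b - b') *\<^sub>R y + (a - a') *\<^sub>R x + (c - c') *\<^sub>R z = 0"
    using e by (simp add: algebra_simps)
  have e3: "(c - c') *\<^sub>R z + (a - a') *\<^sub>R x + (b - b') *\<^sub>R y = 0"
    using e by (simp add: algebra_simps)
  have "a - a' = 0" by (rule cv_zero_coeff[OF assms e])
  moreover have "b - b' = 0" by (rule cv_zero_coeff[OF b2(1) e2])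
  moreover have "c - c' = 0" by (rule cv_zero_coeff[OF b2(2) e3])
  ultimately show "a = a' \<and> b = b' \<and> c = c'" by simp
qed simp

lemma cv_scale: "k *\<^sub>R cv x y z a b c = cv x y z (k*a) (k*b) (k*c)"
  by (simp add: cv_def algebra_simps)

lemma cv_add: "cv x y z a b c + cv x y z a' b' c' = cv x y z (a+a') (b+b') (c+c')"
  by (simp add: cv_def algebra_simps)

lemma cv_in1:
  fixes x y z :: v3
  assumes "span {x, y, z} = UNIV" "cv x y z a b c \<in> span {cv x y z p1 p2 p3}"
  shows "\<exists>k. a = k*p1 \<and> b = k*p2 \<and> c = k*p3"
proof -
  obtain k where "cv x y z a b c = k *\<^sub>R cv x y z p1 p2 p3"
    using assms(2) by (auto simp: span_singleton)
  hence "cv x y z a b c = cv x y z (k*p1) (k*p2) (k*p3)" by (simp add: cv_scale)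
  thus ?thesis using cv_inj[OF assms(1)] by blast
qed

lemma cv_in2:
  fixes x y z :: v3
  assumes "span {x, y, z} = UNIV" "cv x y z a b c \<in> span {cv x y z p1 p2 p3, cv x y z q1 q2 q3}"
  shows "\<exists>k l. a = k*p1 + l*q1 \<and> b = k*p2 + l*q2 \<and> c = k*p3 + l*q3"
proof -
  obtain k where "cv x y z a b c - k *\<^sub>R cv x y z p1 p2 p3 \<in> span {cv x y z q1 q2 q3}"
    using assms(2) span_breakdown_eq by blast
  then obtain l where "cv x y z a b c - k *\<^sub>R cv x y z p1 p2 p3 = l *\<^sub>R cv x y z q1 q2 q3"
    by (auto simp: span_singleton)
  hence "cv x y z a b c = cv x y z (k*p1 + l*q1) (k*p2 + l*q2) (k*p3 + l*q3)"
    by (simp add: cv_scale cv_add[symmetric] algebra_simps)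
  thus ?thesis using cv_inj[OF assms(1)] by blast
qed

lemma cv_memI:
  assumes "a = k*p1 + l*q1" "b = k*p2 + l*q2" "c = k*p3 + l*q3"
  shows "span {cv x y z a b c} \<subseteq> pline (span {cv x y z p1 p2 p3}) (span {cv x y z q1 q2 q3})"
proof -
  have "cv x y z a b c = k *\<^sub>R cv x y z p1 p2 p3 + l *\<^sub>R cv x y z q1 q2 q3"
    using assms by (simp add: cv_scale cv_add)
  hence "cv x y z a b c \<in> span {cv x y z p1 p2 p3, cv x y z q1 q2 q3}"
    by (simp add: span_add span_base span_scale)
  thus ?thesis by (simp add: ln_vec pt_sub)
qed

lemma cv_notmem:
  fixes x y z :: v3
  assumes "span {x, y, z} = UNIV" "\<not> (\<exists>k l. a = k*p1 + l*q1 \<and> b = k*p2 + l*q2 \<and> c = k*p3 + l*q3)"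
  shows "\<not> span {cv x y z a b c} \<subseteq> pline (span {cv x y z p1 p2 p3}) (span {cv x y z q1 q2 q3})"
proof
  assume "span {cv x y z a b c} \<subseteq> pline (span {cv x y z p1 p2 p3}) (span {cv x y z q1 q2 q3})"
  hence "cv x y z a b c \<in> span {cv x y z p1 p2 p3, cv x y z q1 q2 q3}" by (simp add: ln_vec pt_sub)
  from cv_in2[OF assms(1) this] show False using assms(2) by blast
qed

lemma cv_pt_ne:
  fixes x y z :: v3
  assumes "span {x, y, z} = UNIV" "\<not> (\<exists>k. a' = k*a \<and> b' = k*b \<and> c' = k*c)"
  shows "span {cv x y z a b c} \<noteq> span {cv x y z a' b' c'}"
proof
  assume "span {cv x y z a b c} = span {cv x y z a' b' c'}"
  hence "cv x y z a' b' c' \<in> span {cv x y z a b c}" by (metis insertI1 span_base)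
  thus False using cv_in1[OF assms(1)] assms(2) by blast
qed

lemma cv_pt:
  fixes x y z :: v3
  assumes "span {x, y, z} = UNIV" "\<not> (a = 0 \<and> b = 0 \<and> c = 0)"
  shows "span {cv x y z a b c} \<in> proj_points"
proof -
  have "cv x y z a b c \<noteq> cv x y z 0 0 0" using cv_inj[OF assms(1)] assms(2) by simp
  hence "cv x y z a b c \<noteq> 0" by (simp add: cv_def)
  thus ?thesis unfolding proj_points_def by blast
qed




definition std6 :: "v3 \<Rightarrow> v3 \<Rightarrow> v3 \<Rightarrow> v3 set multiset" where
  "std6 x y z = {# span {cv x y z 0 0 1}, span {cv x y z 1 0 1}, span {cv x y z 0 1 1},
     span {cv x y z 1 1 1}, span {cv x y z 1 0 0}, span {cv x y z 0 1 0} #}"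

lemma mem_diff1: "b \<in># A \<Longrightarrow> b \<noteq> a \<Longrightarrow> b \<in># A - {#a#}"
  by (simp add: in_diff_count)

lemma locked_intro2:
  assumes "b \<in> proj_points" "c \<in> proj_points" "d \<in> proj_points" "e \<in> proj_points"
    "b \<in># A" "c \<in># A" "d \<in># A" "e \<in># A" "b \<noteq> a" "c \<noteq> a" "d \<noteq> a" "e \<noteq> a"
    "b \<noteq> c" "d \<noteq> e" "a \<subseteq> pline b c" "a \<subseteq> pline d e" "\<not> b \<subseteq> pline d e"
  shows "locked A a"
proof -
  have ne: "pline b c \<noteq> pline d e" using assms(17) ln_sub1[of b c] by auto
  show ?thesis by (rule locked_intro[OF assms(1-4) mem_diff1[OF assms(5,9)] mem_diff1[OF assms(6,10)]
    mem_diff1[OF assms(7,11)] mem_diff1[OF assms(8,12)] assms(13-16) ne])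
qed

lemma std6_rigid:
  fixes x y z :: v3
  assumes B: "span {x, y, z} = UNIV"
  shows "rigid (std6 x y z)"
proof -
  have pt_a: "span {cv x y z 0 0 1} \<in> proj_points" by (rule cv_pt[OF B]) simp
  have pt_c: "span {cv x y z 1 0 1} \<in> proj_points" by (rule cv_pt[OF B]) simp
  have pt_d: "span {cv x y z 0 1 1} \<in> proj_points" by (rule cv_pt[OF B]) simp
  have pt_f: "span {cv x y z 1 1 1} \<in> proj_points" by (rule cv_pt[OF B]) simp
  have pt_b: "span {cv x y z 1 0 0} \<in> proj_points" by (rule cv_pt[OF B]) simp
  have pt_e: "span {cv x y z 0 1 0} \<in> proj_points" by (rule cv_pt[OF B]) simp
  have ne_ac: "span {cv x y z 0 0 1} \<noteq> span {cv x y z 1 0 1}" by (rule cv_pt_ne[OF B]) auto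
  have ne_ad: "span {cv x y z 0 0 1} \<noteq> span {cv x y z 0 1 1}" by (rule cv_pt_ne[OF B]) auto
  have ne_af: "span {cv x y z 0 0 1} \<noteq> span {cv x y z 1 1 1}" by (rule cv_pt_ne[OF B]) auto
  have ne_ab: "span {cv x y z 0 0 1} \<noteq> span {cv x y z 1 0 0}" by (rule cv_pt_ne[OF B]) auto
  have ne_ae: "span {cv x y z 0 0 1} \<noteq> span {cv x y z 0 1 0}" by (rule cv_pt_ne[OF B]) auto
  have ne_ca: "span {cv x y z 1 0 1} \<noteq> span {cv x y z 0 0 1}" by (rule cv_pt_ne[OF B]) auto
  have ne_cd: "span {cv x y z 1 0 1} \<noteq> span {cv x y z 0 1 1}" by (rule cv_pt_ne[OF B]) auto
  have ne_cf: "span {cv x y z 1 0 1} \<noteq> span {cv x y z 1 1 1}" by (rule cv_pt_ne[OF B]) auto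
  have ne_cb: "span {cv x y z 1 0 1} \<noteq> span {cv x y z 1 0 0}" by (rule cv_pt_ne[OF B]) auto
  have ne_ce: "span {cv x y z 1 0 1} \<noteq> span {cv x y z 0 1 0}" by (rule cv_pt_ne[OF B]) auto
  have ne_da: "span {cv x y z 0 1 1} \<noteq> span {cv x y z 0 0 1}" by (rule cv_pt_ne[OF B]) auto
  have ne_dc: "span {cv x y z 0 1 1} \<noteq> span {cv x y z 1 0 1}" by (rule cv_pt_ne[OF B]) auto
  have ne_df: "span {cv x y z 0 1 1} \<noteq> span {cv x y z 1 1 1}" by (rule cv_pt_ne[OF B]) auto
  have ne_db: "span {cv x y z 0 1 1} \<noteq> span {cv x y z 1 0 0}" by (rule cv_pt_ne[OF B]) auto
  have ne_de: "span {cv x y z 0 1 1} \<noteq> span {cv x y z 0 1 0}" by (rule cv_pt_ne[OF B]) auto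
  have ne_fa: "span {cv x y z 1 1 1} \<noteq> span {cv x y z 0 0 1}" by (rule cv_pt_ne[OF B]) auto
  have ne_fc: "span {cv x y z 1 1 1} \<noteq> span {cv x y z 1 0 1}" by (rule cv_pt_ne[OF B]) auto
  have ne_fd: "span {cv x y z 1 1 1} \<noteq> span {cv x y z 0 1 1}" by (rule cv_pt_ne[OF B]) auto
  have ne_fb: "span {cv x y z 1 1 1} \<noteq> span {cv x y z 1 0 0}" by (rule cv_pt_ne[OF B]) auto
  have ne_fe: "span {cv x y z 1 1 1} \<noteq> span {cv x y z 0 1 0}" by (rule cv_pt_ne[OF B]) auto
  have ne_ba: "span {cv x y z 1 0 0} \<noteq> span {cv x y z 0 0 1}" by (rule cv_pt_ne[OF B]) auto
  have ne_bc: "span {cv x y z 1 0 0} \<noteq> span {cv x y z 1 0 1}" by (rule cv_pt_ne[OF B]) auto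
  have ne_bd: "span {cv x y z 1 0 0} \<noteq> span {cv x y z 0 1 1}" by (rule cv_pt_ne[OF B]) auto
  have ne_bf: "span {cv x y z 1 0 0} \<noteq> span {cv x y z 1 1 1}" by (rule cv_pt_ne[OF B]) auto
  have ne_be: "span {cv x y z 1 0 0} \<noteq> span {cv x y z 0 1 0}" by (rule cv_pt_ne[OF B]) auto
  have ne_ea: "span {cv x y z 0 1 0} \<noteq> span {cv x y z 0 0 1}" by (rule cv_pt_ne[OF B]) auto
  have ne_ec: "span {cv x y z 0 1 0} \<noteq> span {cv x y z 1 0 1}" by (rule cv_pt_ne[OF B]) auto
  have ne_ed: "span {cv x y z 0 1 0} \<noteq> span {cv x y z 0 1 1}" by (rule cv_pt_ne[OF B]) auto
  have ne_ef: "span {cv x y z 0 1 0} \<noteq> span {cv x y z 1 1 1}" by (rule cv_pt_ne[OF B]) auto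
  have ne_eb: "span {cv x y z 0 1 0} \<noteq> span {cv x y z 1 0 0}" by (rule cv_pt_ne[OF B]) auto
  have nd: "nondegenerate (std6 x y z)"
  proof -
    have "{x, y, z} \<subseteq> \<Union> (set_mset (std6 x y z))"
      unfolding std6_def by (auto simp: cv_def intro: span_base)
    hence "span {x, y, z} \<subseteq> pspan (std6 x y z)" unfolding pspan_def by (rule span_mono)
    thus ?thesis unfolding nondegenerate_def using B by auto
  qed
  have lk_a: "locked (std6 x y z) (span {cv x y z 0 0 1})"
  proof (rule locked_intro2[OF pt_b pt_c pt_d pt_e])
    show "span {cv x y z 0 0 1} \<subseteq> pline (span {cv x y z 1 0 0}) (span {cv x y z 1 0 1})" by (rule cv_memI[where k="-1" and l="1"]) simp_all
    show "span {cv x y z 0 0 1} \<subseteq> pline (span {cv x y z 0 1 1}) (span {cv x y z 0 1 0})" by (rule cv_memI[where k="1" and l="-1"]) simp_all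
    show "\<not> span {cv x y z 1 0 0} \<subseteq> pline (span {cv x y z 0 1 1}) (span {cv x y z 0 1 0})" by (rule cv_notmem[OF B]) auto
  qed (simp_all add: std6_def ne_ba ne_ca ne_da ne_ea ne_bc ne_de)
  have lk_c: "locked (std6 x y z) (span {cv x y z 1 0 1})"
  proof (rule locked_intro2[OF pt_a pt_b pt_e pt_f])
    show "span {cv x y z 1 0 1} \<subseteq> pline (span {cv x y z 0 0 1}) (span {cv x y z 1 0 0})" by (rule cv_memI[where k="1" and l="1"]) simp_all
    show "span {cv x y z 1 0 1} \<subseteq> pline (span {cv x y z 0 1 0}) (span {cv x y z 1 1 1})" by (rule cv_memI[where k="-1" and l="1"]) simp_all
    show "\<not> span {cv x y z 0 0 1} \<subseteq> pline (span {cv x y z 0 1 0}) (span {cv x y z 1 1 1})" by (rule cv_notmem[OF B]) auto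
  qed (simp_all add: std6_def ne_ac ne_bc ne_ec ne_fc ne_ab ne_ef)
  have lk_d: "locked (std6 x y z) (span {cv x y z 0 1 1})"
  proof (rule locked_intro2[OF pt_a pt_e pt_b pt_f])
    show "span {cv x y z 0 1 1} \<subseteq> pline (span {cv x y z 0 0 1}) (span {cv x y z 0 1 0})" by (rule cv_memI[where k="1" and l="1"]) simp_all
    show "span {cv x y z 0 1 1} \<subseteq> pline (span {cv x y z 1 0 0}) (span {cv x y z 1 1 1})" by (rule cv_memI[where k="-1" and l="1"]) simp_all
    show "\<not> span {cv x y z 0 0 1} \<subseteq> pline (span {cv x y z 1 0 0}) (span {cv x y z 1 1 1})" by (rule cv_notmem[OF B]) auto
  qed (simp_all add: std6_def ne_ad ne_ed ne_bd ne_fd ne_ae ne_bf)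
  have lk_f: "locked (std6 x y z) (span {cv x y z 1 1 1})"
  proof (rule locked_intro2[OF pt_b pt_d pt_c pt_e])
    show "span {cv x y z 1 1 1} \<subseteq> pline (span {cv x y z 1 0 0}) (span {cv x y z 0 1 1})" by (rule cv_memI[where k="1" and l="1"]) simp_all
    show "span {cv x y z 1 1 1} \<subseteq> pline (span {cv x y z 1 0 1}) (span {cv x y z 0 1 0})" by (rule cv_memI[where k="1" and l="1"]) simp_all
    show "\<not> span {cv x y z 1 0 0} \<subseteq> pline (span {cv x y z 1 0 1}) (span {cv x y z 0 1 0})" by (rule cv_notmem[OF B]) auto
  qed (simp_all add: std6_def ne_bf ne_df ne_cf ne_ef ne_bd ne_ce)
  have lk_b: "locked (std6 x y z) (span {cv x y z 1 0 0})"
  proof (rule locked_intro2[OF pt_a pt_c pt_d pt_f])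
    show "span {cv x y z 1 0 0} \<subseteq> pline (span {cv x y z 0 0 1}) (span {cv x y z 1 0 1})" by (rule cv_memI[where k="-1" and l="1"]) simp_all
    show "span {cv x y z 1 0 0} \<subseteq> pline (span {cv x y z 0 1 1}) (span {cv x y z 1 1 1})" by (rule cv_memI[where k="-1" and l="1"]) simp_all
    show "\<not> span {cv x y z 0 0 1} \<subseteq> pline (span {cv x y z 0 1 1}) (span {cv x y z 1 1 1})" by (rule cv_notmem[OF B]) auto
  qed (simp_all add: std6_def ne_ab ne_cb ne_db ne_fb ne_ac ne_df)
  have lk_e: "locked (std6 x y z) (span {cv x y z 0 1 0})"
  proof (rule locked_intro2[OF pt_a pt_d pt_c pt_f])
    show "span {cv x y z 0 1 0} \<subseteq> pline (span {cv x y z 0 0 1}) (span {cv x y z 0 1 1})" by (rule cv_memI[where k="-1" and l="1"]) simp_all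
    show "span {cv x y z 0 1 0} \<subseteq> pline (span {cv x y z 1 0 1}) (span {cv x y z 1 1 1})" by (rule cv_memI[where k="-1" and l="1"]) simp_all
    show "\<not> span {cv x y z 0 0 1} \<subseteq> pline (span {cv x y z 1 0 1}) (span {cv x y z 1 1 1})" by (rule cv_notmem[OF B]) auto
  qed (simp_all add: std6_def ne_ae ne_de ne_ce ne_fe ne_ad ne_cf)
  show ?thesis unfolding rigid_def using nd lk_a lk_b lk_c lk_d lk_e lk_f
    by (simp add: std6_def)
qed




definition gmap :: "v3 \<Rightarrow> v3 \<Rightarrow> v3 \<Rightarrow> v3 \<Rightarrow> v3" where
  "gmap x y z t = cv x y z (t$1) (t$2) (t$3)"

lemma gmap_linear: "linear (gmap x y z)"
  unfolding linear_iff gmap_def cv_def by (simp add: algebra_simps)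

lemma gmap_vec: "gmap x y z (vector [a, b, c]) = cv x y z a b c"
  by (simp add: gmap_def)

lemma vec_cv: "(vector [a, b, c] :: v3) = cv (vector [1,0,0]) (vector [0,1,0]) (vector [0,0,1]) a b c"
  by (simp add: cv_def vec_eq_iff forall_3)

lemma E_basis: "span {vector [1,0,0], vector [0,1,0], vector [0,0,1] :: v3} = UNIV"
proof -
  have "t \<in> span {vector [1,0,0], vector [0,1,0], vector [0,0,1] :: v3}" for t :: v3
  proof -
    have "t = cv (vector [1,0,0]) (vector [0,1,0]) (vector [0,0,1]) (t$1) (t$2) (t$3)"
      by (simp add: cv_def vec_eq_iff forall_3)
    also have "\<dots> \<in> span {vector [1,0,0], vector [0,1,0], vector [0,0,1] :: v3}"
      unfolding cv_def by (intro span_add span_scale span_base) auto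
    finally show ?thesis .
  qed
  thus ?thesis by auto
qed

lemma lin_vec:
  fixes f :: "v3 \<Rightarrow> v3"
  assumes "linear f"
  shows "f (vector [a, b, c]) = cv (f (vector [1,0,0])) (f (vector [0,1,0])) (f (vector [0,0,1])) a b c"
proof -
  have "(vector [a, b, c] :: v3) = a *\<^sub>R vector [1,0,0] + b *\<^sub>R vector [0,1,0] + c *\<^sub>R vector [0,0,1]"
    by (simp add: vec_eq_iff forall_3)
  hence "f (vector [a, b, c]) = f (a *\<^sub>R vector [1,0,0] + b *\<^sub>R vector [0,1,0] + c *\<^sub>R vector [0,0,1])"
    by (rule arg_cong)
  also have "\<dots> = cv (f (vector [1,0,0])) (f (vector [0,1,0])) (f (vector [0,0,1])) a b c"
    unfolding cv_def using assms by (simp add: linear_add linear_scale)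
  finally show ?thesis .
qed

lemma img_span1: "linear g \<Longrightarrow> g ` span {v} = span {g v}"
  by (metis span_linear_image image_empty image_insert)

lemma img_six:
  fixes f :: "v3 \<Rightarrow> v3"
  assumes "linear f" "\<And>a b c. f (vector [a, b, c]) = cv x y z a b c"
  shows "image_mset ((`) f) six_std = std6 x y z"
  unfolding six_std_def std6_def by (simp add: img_span1[OF assms(1)] assms(2))

lemma lin_basis:
  fixes f :: "v3 \<Rightarrow> v3"
  assumes "linear f" "bij f"
  shows "span {f (vector [1,0,0]), f (vector [0,1,0]), f (vector [0,0,1])} = UNIV"
proof -
  have "span {f (vector [1,0,0]), f (vector [0,1,0]), f (vector [0,0,1])}
      = span (f ` {vector [1,0,0], vector [0,1,0], vector [0,0,1]})" by simp
  also have "\<dots> = f ` span {vector [1,0,0], vector [0,1,0], vector [0,0,1]}"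
    by (rule span_linear_image[OF assms(1)])
  also have "\<dots> = f ` UNIV" by (simp only: E_basis)
  also have "\<dots> = UNIV" using assms(2) by (simp add: bij_is_surj)
  finally show ?thesis .
qed

lemma gmap_bij:
  assumes "span {x, y, z} = UNIV"
  shows "bij (gmap x y z)"
proof -
  have "gmap x y z ` UNIV = gmap x y z ` span {vector [1,0,0], vector [0,1,0], vector [0,0,1]}"
    using E_basis by simp
  also have "\<dots> = span (gmap x y z ` {vector [1,0,0], vector [0,1,0], vector [0,0,1]})"
    by (rule span_linear_image[OF gmap_linear, symmetric])
  also have "gmap x y z ` {vector [1,0,0], vector [0,1,0], vector [0,0,1]} = {x, y, z}"
    by (simp add: gmap_vec cv_def)
  finally have s: "surj (gmap x y z)" using assms by simp
  hence "inj (gmap x y z)" using linear_surjective_imp_injective[OF gmap_linear] by simp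
  thus ?thesis using s by (simp add: bij_def)
qed

lemma pe_std6:
  assumes "span {x, y, z} = UNIV"
  shows "proj_equiv six_std (std6 x y z)"
  unfolding proj_equiv_def
  using gmap_linear gmap_bij[OF assms] img_six[OF gmap_linear gmap_vec] by blast

lemma pe_sym:
  assumes "proj_equiv A B" shows "proj_equiv B A"
proof -
  obtain f where f: "linear f" "bij f" "image_mset ((`) f) A = B"
    using assms unfolding proj_equiv_def by blast
  have l: "linear (inv f)" using f by (simp add: inj_linear_imp_inv_linear bij_is_inj)
  have b: "bij (inv f)" using f by (simp add: bij_imp_bij_inv)
  have c: "((`) (inv f) \<circ> (`) f) = id" using f by (auto simp: image_inv_f_f bij_is_inj)
  have "image_mset ((`) (inv f)) B = A" using f(3) c by (auto simp: multiset.map_comp)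
  thus ?thesis unfolding proj_equiv_def using l b by blast
qed

lemma pe_trans:
  assumes "proj_equiv A B" "proj_equiv B C" shows "proj_equiv A C"
proof -
  obtain f where f: "linear f" "bij f" "image_mset ((`) f) A = B"
    using assms(1) unfolding proj_equiv_def by blast
  obtain g where g: "linear g" "bij g" "image_mset ((`) g) B = C"
    using assms(2) unfolding proj_equiv_def by blast
  have "((`) g \<circ> (`) f) = (`) (g \<circ> f)" by (auto simp: image_comp)
  hence "image_mset ((`) (g \<circ> f)) A = C" using f(3) g(3) by (metis multiset.map_comp)
  thus ?thesis unfolding proj_equiv_def using linear_compose[OF f(1) g(1)] bij_comp[OF f(2) g(2)] by blast
qed

lemma pe_std6_inv:
  fixes A :: "v3 set multiset"
  assumes "proj_equiv six_std A"
  shows "\<exists>x y z. span {x, y, z} = UNIV \<and> A = std6 x y z"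
proof -
  obtain f where f: "linear f" "bij f" "image_mset ((`) f) six_std = A"
    using assms unfolding proj_equiv_def by blast
  show ?thesis using lin_basis[OF f(1,2)] img_six[OF f(1) lin_vec[OF f(1)]] f(3) by metis
qed




lemma std6_card:
  fixes x y z :: v3
  assumes B: "span {x, y, z} = UNIV"
  shows "card (set_mset (std6 x y z)) = 6"
proof -
  have "span {cv x y z 0 0 1} \<noteq> span {cv x y z 1 0 1}" by (rule cv_pt_ne[OF B]) auto
  moreover
  have "span {cv x y z 0 0 1} \<noteq> span {cv x y z 0 1 1}" by (rule cv_pt_ne[OF B]) auto
  moreover
  have "span {cv x y z 0 0 1} \<noteq> span {cv x y z 1 1 1}" by (rule cv_pt_ne[OF B]) auto
  moreover
  have "span {cv x y z 0 0 1} \<noteq> span {cv x y z 1 0 0}" by (rule cv_pt_ne[OF B]) auto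
  moreover
  have "span {cv x y z 0 0 1} \<noteq> span {cv x y z 0 1 0}" by (rule cv_pt_ne[OF B]) auto
  moreover
  have "span {cv x y z 1 0 1} \<noteq> span {cv x y z 0 1 1}" by (rule cv_pt_ne[OF B]) auto
  moreover
  have "span {cv x y z 1 0 1} \<noteq> span {cv x y z 1 1 1}" by (rule cv_pt_ne[OF B]) auto
  moreover
  have "span {cv x y z 1 0 1} \<noteq> span {cv x y z 1 0 0}" by (rule cv_pt_ne[OF B]) auto
  moreover
  have "span {cv x y z 1 0 1} \<noteq> span {cv x y z 0 1 0}" by (rule cv_pt_ne[OF B]) auto
  moreover
  have "span {cv x y z 0 1 1} \<noteq> span {cv x y z 1 1 1}" by (rule cv_pt_ne[OF B]) auto
  moreover
  have "span {cv x y z 0 1 1} \<noteq> span {cv x y z 1 0 0}" by (rule cv_pt_ne[OF B]) auto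
  moreover
  have "span {cv x y z 0 1 1} \<noteq> span {cv x y z 0 1 0}" by (rule cv_pt_ne[OF B]) auto
  moreover
  have "span {cv x y z 1 1 1} \<noteq> span {cv x y z 1 0 0}" by (rule cv_pt_ne[OF B]) auto
  moreover
  have "span {cv x y z 1 1 1} \<noteq> span {cv x y z 0 1 0}" by (rule cv_pt_ne[OF B]) auto
  moreover
  have "span {cv x y z 1 0 0} \<noteq> span {cv x y z 0 1 0}" by (rule cv_pt_ne[OF B]) auto
  ultimately show ?thesis unfolding std6_def by simp
qed

lemma nondeg3:
  assumes "p \<in> proj_points" "q \<in> proj_points" "r \<in> proj_points" "nondegenerate {#p, q, r#}"
  shows "p \<noteq> q" "p \<noteq> r" "q \<noteq> r" "\<not> r \<subseteq> pline p q" "\<not> q \<subseteq> pline p r" "\<not> p \<subseteq> pline q r"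
proof -
  have L: "\<And>H. subspace H \<Longrightarrow> dim H \<le> 2 \<Longrightarrow> p \<subseteq> H \<Longrightarrow> q \<subseteq> H \<Longrightarrow> r \<subseteq> H \<Longrightarrow> False"
    using nondeg_not_in[OF assms(4)] by auto
  show "p \<noteq> q"
  proof
    assume e: "p = q"
    show False by (rule L[OF subspace_ln dim_ln_le[OF assms(1,3)] ln_sub1 _ ln_sub2])
      (use ln_sub1[of p r] e in simp)
  qed
  show "p \<noteq> r"
  proof
    assume e: "p = r"
    show False by (rule L[OF subspace_ln dim_ln_le[OF assms(1,2)] ln_sub1 ln_sub2])
      (use ln_sub1[of p q] e in simp)
  qed
  show "q \<noteq> r"
  proof
    assume e: "q = r"
    show False by (rule L[OF subspace_ln dim_ln_le[OF assms(1,2)] ln_sub1 ln_sub2])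
      (use ln_sub2[where p=p and q=q] e in simp)
  qed
  show "\<not> r \<subseteq> pline p q"
  proof
    assume h: "r \<subseteq> pline p q"
    show False by (rule L[OF subspace_ln dim_ln_le[OF assms(1,2)] ln_sub1 ln_sub2 h])
  qed
  show "\<not> q \<subseteq> pline p r"
  proof
    assume h: "q \<subseteq> pline p r"
    show False by (rule L[OF subspace_ln dim_ln_le[OF assms(1,3)] ln_sub1 h ln_sub2])
  qed
  show "\<not> p \<subseteq> pline q r"
  proof
    assume h: "p \<subseteq> pline q r"
    show False by (rule L[OF subspace_ln dim_ln_le[OF assms(2,3)] h ln_sub1 ln_sub2])
  qed
qed

lemma dt_rigid:
  assumes "double_triangle A"
  shows "rigid A"
proof -
  obtain p q r where pqr: "p \<in> proj_points" "q \<in> proj_points" "r \<in> proj_points"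
    "nondegenerate {#p, q, r#}" "A = {#p, p, q, q, r, r#}"
    using assms unfolding double_triangle_def by blast
  note N = nondeg3[OF pqr(1-4)]
  have nd: "nondegenerate A" using pqr(4,5) by (simp add: nondegenerate_def pspan_def)
  have mem: "u \<in># A - {#w#}" if "u \<in> {p, q, r}" "w \<in> {p, q, r}" for u w
    using that N(1-3) pqr(5) by (auto simp: in_diff_count)
  have lp: "locked A p"
  proof (rule locked_intro[OF pqr(1,2,1,3) mem mem mem mem N(1) N(2) ln_sub1 ln_sub1])
    show "pline p q \<noteq> pline p r" using N(5) ln_sub2[where p=p and q=q] by auto
  qed auto
  have lq: "locked A q"
  proof (rule locked_intro[OF pqr(2,1,2,3) mem mem mem mem N(1)[symmetric] N(3) ln_sub1 ln_sub1])
    show "pline q p \<noteq> pline q r" using N(4) ln_sub2[where p=q and q=r] ln_sym[of q p] by auto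
  qed auto
  have lr: "locked A r"
  proof (rule locked_intro[OF pqr(3,1,3,2) mem mem mem mem N(2)[symmetric] N(3)[symmetric] ln_sub1 ln_sub1])
    show "pline r p \<noteq> pline r q" using N(5) ln_sub2[where p=r and q=q] ln_sym[of r p] by auto
  qed auto
  show ?thesis unfolding rigid_def using nd lp lq lr pqr(5) by auto
qed

definition tri :: "v3 \<Rightarrow> v3 \<Rightarrow> v3 \<Rightarrow> v3 set multiset" where
  "tri u v w = {#span {u}, span {u}, span {v}, span {v}, span {w}, span {w}#}"

lemma dt_basis:
  assumes "double_triangle A"
  shows "\<exists>u v w. span {u, v, w} = UNIV \<and> A = tri u v w"
proof -
  obtain p q r where pqr: "p \<in> proj_points" "q \<in> proj_points" "r \<in> proj_points"
    "nondegenerate {#p, q, r#}" "A = {#p, p, q, q, r, r#}"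
    using assms unfolding double_triangle_def by blast
  note N = nondeg3[OF pqr(1-4)]
  obtain u where u: "u \<noteq> 0" "p = span {u}" using pqr(1) by (rule pt_obtain)
  obtain v where v: "v \<noteq> 0" "q = span {v}" using pqr(2) by (rule pt_obtain)
  obtain w where w: "w \<noteq> 0" "r = span {w}" using pqr(3) by (rule pt_obtain)
  have "span {u, v, w} = UNIV"
    by (rule three_basis) (use u v w N(1) N(4) in \<open>auto simp: ln_vec\<close>)
  thus ?thesis using pqr(5) u v w unfolding tri_def by blast
qed

lemma tri_equiv:
  assumes "span {u, v, w} = UNIV"
  shows "proj_equiv (tri (vector [1,0,0]) (vector [0,1,0]) (vector [0,0,1])) (tri u v w)"
proof -
  have "image_mset ((`) (gmap u v w)) (tri (vector [1,0,0]) (vector [0,1,0]) (vector [0,0,1])) = tri u v w"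
    unfolding tri_def by (simp add: img_span1[OF gmap_linear] gmap_vec cv_def)
  thus ?thesis unfolding proj_equiv_def using gmap_linear gmap_bij[OF assms] by blast
qed

lemma part3:
  assumes "double_triangle A" "double_triangle B"
  shows "proj_equiv A B"
proof -
  obtain u v w where a: "span {u, v, w} = UNIV" "A = tri u v w" using dt_basis[OF assms(1)] by blast
  obtain u' v' w' where b: "span {u', v', w'} = UNIV" "B = tri u' v' w'" using dt_basis[OF assms(2)] by blast
  show ?thesis using pe_trans[OF pe_sym[OF tri_equiv[OF a(1)]] tri_equiv[OF b(1)]] a(2) b(2) by simp
qed

lemma part4: "\<not> (double_triangle A \<and> proj_equiv A six_std)"
proof
  assume h: "double_triangle A \<and> proj_equiv A six_std"
  obtain x y z where B: "span {x, y, z} = UNIV" "A = std6 x y z"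
    using pe_std6_inv[OF pe_sym] h by blast
  obtain p q r where "A = {#p, p, q, q, r, r#}" using h unfolding double_triangle_def by blast
  hence "card (set_mset A) \<le> 3" by (simp add: card_insert_if)
  thus False using std6_card[OF B(1)] B(2) by simp
qed




lemma span_scale1:
  fixes v :: v3
  assumes "k \<noteq> 0" shows "span {k *\<^sub>R v} = span {v}"
proof
  show "span {k *\<^sub>R v} \<subseteq> span {v}" by (simp add: pt_sub span_base span_scale)
  have "v = (1/k) *\<^sub>R (k *\<^sub>R v)" using assms by simp
  hence "v \<in> span {k *\<^sub>R v}" by (metis span_base span_scale insertI1)
  thus "span {v} \<subseteq> span {k *\<^sub>R v}" by (simp add: pt_sub)
qed

lemma pts_eq:
  assumes "p \<in> proj_points" "q \<in> proj_points"
    "r \<in> proj_points" "s \<in> proj_points" "t \<in> proj_points" "u \<in> proj_points"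
    "p \<subseteq> pline r s" "q \<subseteq> pline r s" "p \<subseteq> pline t u" "q \<subseteq> pline t u"
    "pline r s \<noteq> pline t u"
  shows "p = q"
  using two_lines[OF assms(1,2) _ assms(3-10)] assms(11) by blast

lemma span3_obtain:
  fixes t u v w :: v3
  assumes "span {u, v, w} = UNIV"
  obtains \<alpha> \<beta> \<gamma> where "t = \<alpha> *\<^sub>R u + \<beta> *\<^sub>R v + \<gamma> *\<^sub>R w"
proof -
  have "t \<in> span (insert u {v, w})" using assms by simp
  then obtain \<alpha> where "t - \<alpha> *\<^sub>R u \<in> span (insert v {w})" using span_breakdown_eq by blast
  then obtain \<beta> where "t - \<alpha> *\<^sub>R u - \<beta> *\<^sub>R v \<in> span {w}" using span_breakdown_eq by blast
  then obtain \<gamma> where "t - \<alpha> *\<^sub>R u - \<beta> *\<^sub>R v = \<gamma> *\<^sub>R w" by (auto simp: span_singleton)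
  hence "t = \<alpha> *\<^sub>R u + \<beta> *\<^sub>R v + \<gamma> *\<^sub>R w" by (simp add: algebra_simps)
  thus ?thesis by (rule that)
qed

lemma in_span2I: "x = k *\<^sub>R u + l *\<^sub>R v \<Longrightarrow> x \<in> span {u, v}"
  by (simp add: span_add span_base span_scale)

lemma quad:
  assumes P: "a \<in> proj_points" "b \<in> proj_points" "c \<in> proj_points" "d \<in> proj_points"
    "e \<in> proj_points" "f \<in> proj_points"
  and D: "a \<noteq> b" "a \<noteq> e" "b \<noteq> f" "e \<noteq> f" "d \<noteq> e" "b \<noteq> c" "b \<noteq> e"
  and H: "a \<subseteq> pline b c" "a \<subseteq> pline d e" "f \<subseteq> pline b d" "f \<subseteq> pline c e"
    "\<not> f \<subseteq> pline b c" "\<not> f \<subseteq> pline d e" "\<not> e \<subseteq> pline b c" "\<not> b \<subseteq> pline d e"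
  shows "\<exists>x y z. span {x, y, z} = UNIV \<and> {#a, b, c, d, e, f#} = std6 x y z"
proof -
  obtain w where w: "w \<noteq> 0" "a = span {w}" using P(1) by (rule pt_obtain)
  obtain u where u: "u \<noteq> 0" "b = span {u}" using P(2) by (rule pt_obtain)
  obtain v where v: "v \<noteq> 0" "e = span {v}" using P(5) by (rule pt_obtain)
  obtain t where t: "t \<noteq> 0" "f = span {t}" using P(6) by (rule pt_obtain)
  have L1: "pline b c = span {u, w}"
    using ln_exch[OF P(2,3,1) H(1) D(1)] u w by (simp add: ln_vec)
  have "a \<subseteq> pline e d" using H(2) ln_sym by metis
  hence L2: "pline d e = span {v, w}"
    using ln_exch[OF P(5,4,1) _ D(2)] v w ln_sym[of d e] by (simp add: ln_vec)
  have "span {u, w, v} = UNIV"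
    by (rule three_basis) (use u v w D(1) H(7) L1 in auto)
  hence B: "span {u, v, w} = UNIV" by (simp add: insert_commute)
  obtain \<alpha> \<beta> \<gamma> where tc: "t = \<alpha> *\<^sub>R u + \<beta> *\<^sub>R v + \<gamma> *\<^sub>R w" using span3_obtain[OF B] by blast
  have a0: "\<alpha> \<noteq> 0"
  proof
    assume "\<alpha> = 0"
    hence "t \<in> span {v, w}" using tc by (auto intro: in_span2I)
    thus False using H(6) L2 t by (simp add: pt_sub)
  qed
  have b0: "\<beta> \<noteq> 0"
  proof
    assume "\<beta> = 0"
    hence "t \<in> span {u, w}" using tc by (auto intro: in_span2I)
    thus False using H(5) L1 t by (simp add: pt_sub)
  qed
  have g0: "\<gamma> \<noteq> 0"
  proof
    assume "\<gamma> = 0"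
    hence "t \<in> span {u, v}" using tc by (auto intro: in_span2I)
    hence fbe: "f \<subseteq> pline b e" using t u v by (simp add: pt_sub ln_vec)
    have "pline b d = pline b e"
      by (rule two_lines[OF P(2,6) D(3) P(2,4,2,5) ln_sub1 H(3) ln_sub1 fbe])
    hence "d \<subseteq> pline b e" using ln_sub2[where p=b and q=d] by simp
    hence "pline b e = pline d e"
      by (rule line_eq[OF subspace_ln dim_ln_le[OF P(2,5)] P(4,5) D(5) _ ln_sub2])
    thus False using H(8) ln_sub1[of b e] by simp
  qed
  define x where "x = \<alpha> *\<^sub>R u"
  define y where "y = \<beta> *\<^sub>R v"
  define z where "z = \<gamma> *\<^sub>R w"
  have Bx: "span {x, y, z} = UNIV"
  proof -
    have "u \<in> span {x, y, z}" "v \<in> span {x, y, z}" "w \<in> span {x, y, z}"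
    proof -
      have "u = (1/\<alpha>) *\<^sub>R x" "v = (1/\<beta>) *\<^sub>R y" "w = (1/\<gamma>) *\<^sub>R z"
        using a0 b0 g0 by (simp_all add: x_def y_def z_def)
      moreover have "x \<in> span {x, y, z}" "y \<in> span {x, y, z}" "z \<in> span {x, y, z}"
        by (auto intro: span_base)
      ultimately show "u \<in> span {x, y, z}" "v \<in> span {x, y, z}" "w \<in> span {x, y, z}"
        by (metis span_scale)+
    qed
    hence "span {u, v, w} \<subseteq> span {x, y, z}" by (simp add: span_minimal)
    thus ?thesis using B by auto
  qed
  have ea: "span {cv x y z 0 0 1} = a" using w g0 by (simp add: cv_def z_def span_scale1)
  have eb: "span {cv x y z 1 0 0} = b" using u a0 by (simp add: cv_def x_def span_scale1)
  have ee: "span {cv x y z 0 1 0} = e" using v b0 by (simp add: cv_def y_def span_scale1)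
  have ef: "span {cv x y z 1 1 1} = f" using t tc by (simp add: cv_def x_def y_def z_def)
  have ec: "span {cv x y z 1 0 1} = c"
  proof -
    have "f \<subseteq> pline e c" using H(4) ln_sym by metis
    hence Lef: "pline e f = pline e c" by (rule ln_exch[OF P(5,3,6)]) (use D(4) in auto)
    have Lef': "pline e f = span {v, t}" using v t by (simp add: ln_vec)
    have "cv x y z 1 0 1 = \<alpha> *\<^sub>R u + \<gamma> *\<^sub>R w" by (simp add: cv_def x_def z_def)
    hence m1: "span {cv x y z 1 0 1} \<subseteq> pline b c" using L1 by (simp add: pt_sub in_span2I)
    have "cv x y z 1 0 1 = 1 *\<^sub>R t + (- \<beta>) *\<^sub>R v" using tc by (simp add: cv_def x_def z_def)
    hence "cv x y z 1 0 1 \<in> span {v, t}" by (metis in_span2I add.commute)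
    hence m2: "span {cv x y z 1 0 1} \<subseteq> pline e f" using Lef' by (simp add: pt_sub)
    have ne: "pline b c \<noteq> pline e f" using H(7) ln_sub1[of e f] by auto
    have "c \<subseteq> pline e f" using Lef ln_sub2[where p=e and q=c] by simp
    show ?thesis
      by (rule pts_eq[OF cv_pt[OF Bx] P(3) P(2,3,5,6) m1 ln_sub2 m2 \<open>c \<subseteq> pline e f\<close> ne]) simp
  qed
  have ed: "span {cv x y z 0 1 1} = d"
  proof -
    have Lbf: "pline b f = pline b d" by (rule ln_exch[OF P(2,4,6) H(3)]) (use D(3) in auto)
    have Lbf': "pline b f = span {u, t}" using u t by (simp add: ln_vec)
    have "cv x y z 0 1 1 = \<beta> *\<^sub>R v + \<gamma> *\<^sub>R w" by (simp add: cv_def y_def z_def)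
    hence m1: "span {cv x y z 0 1 1} \<subseteq> pline d e" using L2 by (simp add: pt_sub in_span2I)
    have "cv x y z 0 1 1 = 1 *\<^sub>R t + (- \<alpha>) *\<^sub>R u" using tc by (simp add: cv_def y_def z_def)
    hence "cv x y z 0 1 1 \<in> span {u, t}" by (metis in_span2I add.commute)
    hence m2: "span {cv x y z 0 1 1} \<subseteq> pline b f" using Lbf' by (simp add: pt_sub)
    have ne: "pline d e \<noteq> pline b f" using H(8) ln_sub1[of b f] by auto
    have "d \<subseteq> pline b f" using Lbf ln_sub2[where p=b and q=d] by simp
    show ?thesis
      by (rule pts_eq[OF cv_pt[OF Bx] P(4) P(4,5,2,6) m1 ln_sub1 m2 \<open>d \<subseteq> pline b f\<close> ne]) simp
  qed
  have "{#a, b, c, d, e, f#} = std6 x y z"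
    unfolding std6_def ea eb ec ed ee ef by (simp add: add_mset_commute)
  thus ?thesis using Bx by blast
qed




lemma lineG:
  assumes "a \<in> proj_points" "x \<in> proj_points" "p \<in> proj_points" "q \<in> proj_points"
    "subspace L1" "dim L1 \<le> 2" "subspace L2" "dim L2 \<le> 2" "L1 \<noteq> L2"
    "a \<subseteq> L1" "a \<subseteq> L2" "x \<subseteq> L1" "x \<noteq> a" "p \<noteq> q" "p \<noteq> x" "q \<noteq> x"
    "p \<subseteq> L1 \<or> p \<subseteq> L2" "q \<subseteq> L1 \<or> q \<subseteq> L2" "x \<subseteq> pline p q"
  shows "pline p q = L1"
proof -
  note eq1 = line_eq[OF assms(5,6)]
  note eq2 = line_eq[OF assms(7,8)]
  note eqpq = line_eq[OF subspace_ln dim_ln_le[OF assms(3,4)]]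
  show ?thesis
  proof (cases "p \<subseteq> L1")
    case pT: True
    show ?thesis
    proof (cases "q \<subseteq> L1")
      case True
      show ?thesis using eq1[OF assms(3,4,14) pT True] by simp
    next
      case False
      have "L1 = pline x p" using eq1[OF assms(2,3) assms(15)[symmetric] assms(12) pT] .
      moreover have "pline p q = pline x p"
        using eqpq[OF assms(2,3) assms(15)[symmetric] assms(19) ln_sub1] .
      ultimately have "pline p q = L1" by simp
      thus ?thesis using False ln_sub2[where p=p and q=q] by simp
    qed
  next
    case pF: False
    show ?thesis
    proof (cases "q \<subseteq> L1")
      case True
      have "L1 = pline x q" using eq1[OF assms(2,4) assms(16)[symmetric] assms(12) True] .
      moreover have "pline p q = pline x q"
        using eqpq[OF assms(2,4) assms(16)[symmetric] assms(19) ln_sub2] .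
      ultimately have "pline p q = L1" by simp
      thus ?thesis using pF ln_sub1[of p q] by simp
    next
      case False
      have "p \<subseteq> L2" "q \<subseteq> L2" using assms(17,18) pF False by auto
      hence "L2 = pline p q" using eq2[OF assms(3,4,14)] by simp
      hence "x \<subseteq> L2" using assms(19) by simp
      hence "L2 = pline x a" using eq2[OF assms(2,1,13)] assms(11) by simp
      moreover have "L1 = pline x a" using eq1[OF assms(2,1,13) assms(12,10)] .
      ultimately show ?thesis using assms(9) by simp
    qed
  qed
qed

lemma lockG:
  assumes "a \<in> proj_points" "x \<in> proj_points"
    "subspace L1" "dim L1 \<le> 2" "subspace L2" "dim L2 \<le> 2" "L1 \<noteq> L2"
    "a \<subseteq> L1" "a \<subseteq> L2" "x \<subseteq> L1" "x \<noteq> a"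
    and OK: "\<And>z. z \<in> {p, q, r, s} \<Longrightarrow> z \<in> proj_points \<and> z \<noteq> x \<and> (z \<subseteq> L1 \<or> z \<subseteq> L2)"
    and "p \<noteq> q" "r \<noteq> s" "x \<subseteq> pline p q" "x \<subseteq> pline r s" "pline p q \<noteq> pline r s"
  shows False
proof -
  have "pline p q = L1"
    using lineG[OF assms(1,2) _ _ assms(3-11) assms(13) _ _ _ _ assms(15)] OK[of p] OK[of q] by auto
  moreover have "pline r s = L1"
    using lineG[OF assms(1,2) _ _ assms(3-11) assms(14) _ _ _ _ assms(16)] OK[of r] OK[of s] by auto
  ultimately show False using assms(17) by simp
qed




lemma eq_of_sub_size:
  fixes M A :: "'a multiset"
  assumes "M \<subseteq># A" "size A \<le> size M"
  shows "A = M"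
proof (rule ccontr)
  assume "A \<noteq> M"
  hence "M \<subset># A" using assms(1) by (simp add: subset_mset.less_le)
  hence "size M < size A" by (rule mset_subset_size)
  thus False using assms(2) by simp
qed

lemma nondeg_pts:
  assumes "p \<in> proj_points" "q \<in> proj_points" "r \<in> proj_points" "p \<noteq> q" "\<not> r \<subseteq> pline p q"
  shows "nondegenerate {#p, q, r#}"
proof -
  obtain u where u: "u \<noteq> 0" "p = span {u}" using assms(1) by (rule pt_obtain)
  obtain v where v: "v \<noteq> 0" "q = span {v}" using assms(2) by (rule pt_obtain)
  obtain w where w: "w \<noteq> 0" "r = span {w}" using assms(3) by (rule pt_obtain)
  have B: "span {u, v, w} = UNIV"
    by (rule three_basis) (use u v w assms(4,5) in \<open>auto simp: ln_vec\<close>)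
  have "{u, v, w} \<subseteq> \<Union> (set_mset {#p, q, r#})" using u v w by (auto intro: span_base)
  hence "span {u, v, w} \<subseteq> pspan {#p, q, r#}" unfolding pspan_def by (rule span_mono)
  thus ?thesis unfolding nondegenerate_def using B by auto
qed

lemma classify_nosimple:
  fixes A :: "v3 set multiset"
  assumes S: "set_mset A \<subseteq> proj_points" and nd: "nondegenerate A" and sz: "size A \<le> 6"
    and C: "\<And>z. z \<in># A \<Longrightarrow> count A z \<noteq> 1"
  shows "size A = 6 \<and> double_triangle A"
proof -
  have PA: "\<And>z. z \<in># A \<Longrightarrow> z \<in> proj_points" using S by auto
  have C2: "2 \<le> count A z" if "z \<in># A" for z proof -
    have "0 < count A z" using that by simp
    thus ?thesis using C[OF that] by linarith
  qed
  obtain p where p: "p \<in># A"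
  proof (cases "A = {#}")
    case True
    have "False" by (rule nondeg_not_in[OF nd, of "span {}"]) (use True in auto)
    thus ?thesis ..
  next
    case False thus ?thesis using that by (meson multiset_nonemptyE)
  qed
  obtain q where q: "q \<in># A" "\<not> q \<subseteq> p"
  proof (rule ccontr)
    assume "\<not> thesis"
    hence "\<forall>z\<in>#A. z \<subseteq> p" using that by blast
    thus False using nondeg_not_in[OF nd pt_subspace[OF PA[OF p]]] pt_dim[OF PA[OF p]] by simp
  qed
  obtain r where r: "r \<in># A" "\<not> r \<subseteq> pline p q"
  proof (rule ccontr)
    assume "\<not> thesis"
    hence "\<forall>z\<in>#A. z \<subseteq> pline p q" using that by blast
    thus False using nondeg_not_in[OF nd subspace_ln dim_ln_le[OF PA[OF p] PA[OF q(1)]]] by simp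
  qed
  have pq: "p \<noteq> q" using q(2) by auto
  have rp: "r \<noteq> p" using r(2) ln_sub1[of p q] by auto
  have rq: "r \<noteq> q" using r(2) ln_sub2[where p=p and q=q] by auto
  have sub: "{#p, p, q, q, r, r#} \<subseteq># A"
    unfolding subseteq_mset_def
  proof
    fix x
    show "count {#p, p, q, q, r, r#} x \<le> count A x"
      using C2[OF p] C2[OF q(1)] C2[OF r(1)] pq rp rq by auto
  qed
  have AM: "A = {#p, p, q, q, r, r#}" by (rule eq_of_sub_size[OF sub]) (use sz in simp)
  have "nondegenerate {#p, q, r#}" by (rule nondeg_pts[OF PA[OF p] PA[OF q(1)] PA[OF r(1)] pq r(2)])
  hence "double_triangle A" unfolding double_triangle_def using AM PA p q r by blast
  thus ?thesis using AM by simp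
qed




lemma distinct_sub:
  assumes "distinct xs" "set xs \<subseteq> set_mset A"
  shows "mset xs \<subseteq># A"
proof -
  have "mset xs = mset_set (set xs)" using assms(1) by (simp add: mset_set_set)
  also have "\<dots> \<subseteq># mset_set (set_mset A)" using assms(2) by (simp add: subset_imp_msubset_mset_set)
  also have "\<dots> \<subseteq># A" by (rule mset_set_set_mset_msubset)
  finally show ?thesis .
qed

lemma classify_simple:
  fixes A :: "v3 set multiset"
  assumes S: "set_mset A \<subseteq> proj_points" and R: "rigid A" and sz: "size A \<le> 6"
    and a: "a \<in># A" "count A a = 1"
  shows "size A = 6 \<and> proj_equiv A six_std"
proof -
  have lk: "\<And>z. z \<in># A \<Longrightarrow> locked A z" using R unfolding rigid_def by auto
  have PA: "\<And>z. z \<in># A \<Longrightarrow> z \<in> proj_points" using S by auto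
  obtain b c d e where bcde: "b \<in># A" "c \<in># A" "d \<in># A" "e \<in># A" "b \<noteq> a" "c \<noteq> a" "d \<noteq> a" "e \<noteq> a"
      "b \<noteq> c" "d \<noteq> e" "a \<subseteq> pline b c" "a \<subseteq> pline d e" "pline b c \<noteq> pline d e"
    using locked_simple[OF S a(2) lk[OF a(1)]] by (elim exE conjE) (rule that; assumption)
  note Pa = PA[OF a(1)] and Pb = PA[OF bcde(1)] and Pc = PA[OF bcde(2)]
    and Pd = PA[OF bcde(3)] and Pe = PA[OF bcde(4)]
  define L1 where "L1 = pline b c"
  define L2 where "L2 = pline d e"
  have sL1: "subspace L1" "dim L1 \<le> 2" unfolding L1_def using subspace_ln dim_ln_le[OF Pb Pc] by auto
  have sL2: "subspace L2" "dim L2 \<le> 2" unfolding L2_def using subspace_ln dim_ln_le[OF Pd Pe] by auto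
  have L12: "L1 \<noteq> L2" unfolding L1_def L2_def by (rule bcde(13))
  have inL: "a \<subseteq> L1" "b \<subseteq> L1" "c \<subseteq> L1" "a \<subseteq> L2" "d \<subseteq> L2" "e \<subseteq> L2"
    unfolding L1_def L2_def using bcde(11,12) ln_sub1 ln_sub2 by auto
  have notL: False if "z \<in> proj_points" "z \<noteq> a" "z \<subseteq> L1" "z \<subseteq> L2" for z
    using two_lines[OF Pa that(1) that(2)[symmetric] Pb Pc Pd Pe] inL that(3,4) L12
    unfolding L1_def L2_def by blast
  have nd1: "\<not> d \<subseteq> L1" "\<not> e \<subseteq> L1" and nb2: "\<not> b \<subseteq> L2" "\<not> c \<subseteq> L2"
    using notL[OF Pd bcde(7)] notL[OF Pe bcde(8)] notL[OF Pb bcde(5)] notL[OF Pc bcde(6)] inL by auto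
  have dist: "b \<noteq> d" "b \<noteq> e" "c \<noteq> d" "c \<noteq> e" using nd1 inL by auto
  show ?thesis
  proof (cases "\<exists>f\<in>#A. f \<notin> {a, b, c, d, e}")
    case True
    then obtain f where f: "f \<in># A" "f \<noteq> a" "f \<noteq> b" "f \<noteq> c" "f \<noteq> d" "f \<noteq> e" by auto
    note Pf = PA[OF f(1)]
    have "distinct [a, b, c, d, e, f]" using bcde(5-10) dist f(2-6) by auto
    moreover have "set [a, b, c, d, e, f] \<subseteq> set_mset A" using a(1) bcde(1-4) f(1) by auto
    ultimately have "mset [a, b, c, d, e, f] \<subseteq># A" by (rule distinct_sub)
    hence sub: "{#a, b, c, d, e, f#} \<subseteq># A" by simp
    have AM: "A = {#a, b, c, d, e, f#}" by (rule eq_of_sub_size[OF sub]) (use sz in simp)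
    have cf: "count A f = 1" unfolding AM using f bcde(5-10) dist by simp
    obtain p q r s where pqrs: "p \<in># A" "q \<in># A" "r \<in># A" "s \<in># A" "p \<noteq> f" "q \<noteq> f" "r \<noteq> f" "s \<noteq> f"
      "p \<noteq> q" "r \<noteq> s" "f \<subseteq> pline p q" "f \<subseteq> pline r s" "pline p q \<noteq> pline r s"
      using locked_simple[OF S cf lk[OF f(1)]] by (elim exE conjE) (rule that; assumption)
    have memA: "z \<in> {a, b, c, d, e}" if "z \<in># A" "z \<noteq> f" for z using that unfolding AM by auto
    have OKz: "z \<in> proj_points \<and> z \<noteq> f \<and> (z \<subseteq> L1 \<or> z \<subseteq> L2)" if "z \<in> {p, q, r, s}" for z
    proof -
      have zA: "z \<in># A" "z \<noteq> f" using that pqrs by auto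
      hence "z \<in> {a, b, c, d, e}" by (rule memA)
      hence "z \<subseteq> L1 \<or> z \<subseteq> L2" using inL by auto
      thus ?thesis using zA PA by simp
    qed
    have OKz': "z \<in> proj_points \<and> z \<noteq> f \<and> (z \<subseteq> L2 \<or> z \<subseteq> L1)" if "z \<in> {p, q, r, s}" for z
      using OKz[OF that] by blast
    have fL1: "\<not> f \<subseteq> L1"
    proof
      assume h: "f \<subseteq> L1"
      show False by (rule lockG[OF Pa Pf sL1 sL2 L12 inL(1,4) h f(2) OKz pqrs(9-13)])
    qed
    have fL2: "\<not> f \<subseteq> L2"
    proof
      assume h: "f \<subseteq> L2"
      show False by (rule lockG[OF Pa Pf sL2 sL1 L12[symmetric] inL(4,1) h f(2) OKz' pqrs(9-13)])
    qed
    have pair: "(u \<in> {b, c} \<and> w \<in> {d, e}) \<or> (u \<in> {d, e} \<and> w \<in> {b, c})"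
      if "u \<in> {a, b, c, d, e}" "w \<in> {a, b, c, d, e}" "u \<noteq> w" "f \<subseteq> pline u w" for u w
    proof -
      have Pu: "u \<in> proj_points" "w \<in> proj_points" using that(1,2) Pa Pb Pc Pd Pe by auto
      have n1: "\<not> (u \<subseteq> L1 \<and> w \<subseteq> L1)"
      proof
        assume "u \<subseteq> L1 \<and> w \<subseteq> L1"
        hence "L1 = pline u w" using line_eq[OF sL1 Pu that(3)] by simp
        thus False using fL1 that(4) by simp
      qed
      have n2: "\<not> (u \<subseteq> L2 \<and> w \<subseteq> L2)"
      proof
        assume "u \<subseteq> L2 \<and> w \<subseteq> L2"
        hence "L2 = pline u w" using line_eq[OF sL2 Pu that(3)] by simp
        thus False using fL2 that(4) by simp
      qed
      show ?thesis using that(1-3) n1 n2 inL by auto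
    qed
    have disj: False if "z \<in> {p, q}" "z \<in> {r, s}" for z
    proof -
      have z: "z \<in># A" "z \<noteq> f" using that pqrs by auto
      have zp: "z \<subseteq> pline p q" using that ln_sub1[of p q] ln_sub2[where p=p and q=q] by auto
      have zr: "z \<subseteq> pline r s" using that ln_sub1[of r s] ln_sub2[where p=r and q=s] by auto
      from zp zr have "pline p q = pline r s"
        using two_lines[OF Pf PA[OF z(1)] z(2)[symmetric] PA[OF pqrs(1)] PA[OF pqrs(2)]
            PA[OF pqrs(3)] PA[OF pqrs(4)] pqrs(11)] pqrs(12) by blast
      thus False using pqrs(13) by simp
    qed
    have pq: "p \<in> {a, b, c, d, e}" "q \<in> {a, b, c, d, e}" "r \<in> {a, b, c, d, e}" "s \<in> {a, b, c, d, e}"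
      using memA pqrs(1-8) by auto
    obtain \<beta>1 \<delta>1 where bd1: "\<beta>1 \<in> {b, c}" "\<delta>1 \<in> {d, e}" "f \<subseteq> pline \<beta>1 \<delta>1" "{p, q} = {\<beta>1, \<delta>1}"
    proof -
      from pair[OF pq(1,2) pqrs(9,11)] show ?thesis
      proof
        assume "p \<in> {b, c} \<and> q \<in> {d, e}" thus ?thesis using that pqrs(11) by blast
      next
        assume "p \<in> {d, e} \<and> q \<in> {b, c}" thus ?thesis using that[of q p] pqrs(11) ln_sym[of p q] by auto
      qed
    qed
    obtain \<beta>2 \<delta>2 where bd2: "\<beta>2 \<in> {b, c}" "\<delta>2 \<in> {d, e}" "f \<subseteq> pline \<beta>2 \<delta>2" "{r, s} = {\<beta>2, \<delta>2}"
    proof -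
      from pair[OF pq(3,4) pqrs(10,12)] show ?thesis
      proof
        assume "r \<in> {b, c} \<and> s \<in> {d, e}" thus ?thesis using that pqrs(12) by blast
      next
        assume "r \<in> {d, e} \<and> s \<in> {b, c}" thus ?thesis using that[of s r] pqrs(12) ln_sym[of r s] by auto
      qed
    qed
    have "\<beta>1 \<noteq> \<beta>2" using disj[of \<beta>1] bd1(4) bd2(4) by auto
    moreover have "\<delta>1 \<noteq> \<delta>2" using disj[of \<delta>1] bd1(4) bd2(4) by auto
    ultimately have opt: "(f \<subseteq> pline b d \<and> f \<subseteq> pline c e) \<or> (f \<subseteq> pline b e \<and> f \<subseteq> pline c d)"
      using bd1(1-3) bd2(1-3) by auto
    have fL1': "\<not> f \<subseteq> pline b c" and fL2': "\<not> f \<subseteq> pline d e"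
      and nd1': "\<not> d \<subseteq> pline b c" "\<not> e \<subseteq> pline b c" and nb2': "\<not> b \<subseteq> pline d e"
      using fL1 fL2 nd1 nb2 unfolding L1_def L2_def by auto
    have "proj_equiv A six_std"
    proof (cases "f \<subseteq> pline b d \<and> f \<subseteq> pline c e")
      case True
      obtain x y z where xyz: "span {x, y, z} = UNIV" "{#a, b, c, d, e, f#} = std6 x y z"
        using quad[OF Pa Pb Pc Pd Pe Pf bcde(5)[symmetric] bcde(8)[symmetric] f(3)[symmetric]
            f(6)[symmetric] bcde(10) bcde(9) dist(2) bcde(11,12) True[THEN conjunct1] True[THEN conjunct2]
            fL1' fL2' nd1'(2) nb2'] by blast
      show ?thesis using pe_sym[OF pe_std6[OF xyz(1)]] xyz(2) AM by simp
    next
      case False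
      hence F: "f \<subseteq> pline b e" "f \<subseteq> pline c d" using opt by auto
      have a': "a \<subseteq> pline e d" using bcde(12) ln_sym by metis
      have n1: "\<not> f \<subseteq> pline e d" "\<not> b \<subseteq> pline e d" using fL2 nb2 ln_sym[of d e] unfolding L2_def by auto
      obtain x y z where xyz: "span {x, y, z} = UNIV" "{#a, b, c, e, d, f#} = std6 x y z"
        using quad[OF Pa Pb Pc Pe Pd Pf bcde(5)[symmetric] bcde(7)[symmetric] f(3)[symmetric]
            f(5)[symmetric] bcde(10)[symmetric] bcde(9) dist(1) bcde(11) a' F fL1' n1(1) nd1'(1) n1(2)] by blast
      have "{#a, b, c, e, d, f#} = {#a, b, c, d, e, f#}" by (simp add: add_mset_commute)
      thus ?thesis using pe_sym[OF pe_std6[OF xyz(1)]] xyz(2) AM by simp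
    qed
    thus ?thesis using AM by simp
  next
    case False
    hence memA: "z \<in> {a, b, c, d, e}" if "z \<in># A" for z using that by blast
    have c2: "2 \<le> count A u" if u: "u \<in> {b, c, d, e}" for u
    proof (rule ccontr)
      assume "\<not> 2 \<le> count A u"
      moreover have uA: "u \<in># A" using u bcde by auto
      moreover have "0 < count A u" using uA by simp
      ultimately have cu: "count A u = 1" by linarith
      obtain p q r s where pqrs: "p \<in># A" "q \<in># A" "r \<in># A" "s \<in># A" "p \<noteq> u" "q \<noteq> u" "r \<noteq> u" "s \<noteq> u"
        "p \<noteq> q" "r \<noteq> s" "u \<subseteq> pline p q" "u \<subseteq> pline r s" "pline p q \<noteq> pline r s"
        using locked_simple[OF S cu lk[OF uA]] by (elim exE conjE) (rule that; assumption)
      have OKz: "z \<in> proj_points \<and> z \<noteq> u \<and> (z \<subseteq> L1 \<or> z \<subseteq> L2)" if "z \<in> {p, q, r, s}" for z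
      proof -
        have zA: "z \<in># A" "z \<noteq> u" using that pqrs by auto
        have "z \<in> {a, b, c, d, e}" by (rule memA[OF zA(1)])
        then have "z \<subseteq> L1 \<or> z \<subseteq> L2" using inL by auto
        thus ?thesis using zA PA by simp
      qed
      have OKz': "z \<in> proj_points \<and> z \<noteq> u \<and> (z \<subseteq> L2 \<or> z \<subseteq> L1)" if "z \<in> {p, q, r, s}" for z
        using OKz[OF that] by blast
      have ua: "u \<noteq> a" using u bcde by auto
      show False
      proof (cases "u \<subseteq> L1")
        case True
        show False by (rule lockG[OF Pa PA[OF uA] sL1 sL2 L12 inL(1,4) True ua OKz pqrs(9-13)])
      next
        case False
        hence "u \<subseteq> L2" using u inL by auto
        show False by (rule lockG[OF Pa PA[OF uA] sL2 sL1 L12[symmetric] inL(4,1) \<open>u \<subseteq> L2\<close> ua OKz' pqrs(9-13)])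
      qed
    qed
    have "(\<Sum>x\<in>{a, b, c, d, e}. count A x) \<le> (\<Sum>x\<in>set_mset A. count A x)"
      by (rule sum_mono2) (use a(1) bcde(1-4) in auto)
    also have "\<dots> = size A" by (simp add: size_multiset_overloaded_eq)
    finally have le: "(\<Sum>x\<in>{a, b, c, d, e}. count A x) \<le> size A" .
    have "(\<Sum>x\<in>{a, b, c, d, e}. count A x) = count A a + count A b + count A c + count A d + count A e"
      using bcde(5-10) dist by simp
    moreover have "2 \<le> count A b" "2 \<le> count A c" "2 \<le> count A d" "2 \<le> count A e" using c2 by auto
    moreover have "1 \<le> count A a" using a(2) by simp
    ultimately have "9 \<le> size A" using le by linarith
    thus ?thesis using sz by simp
  qed
qed




lemma classify:
  fixes A :: "v3 set multiset"
  assumes S: "set_mset A \<subseteq> proj_points" and R: "rigid A" and sz: "size A \<le> 6"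
  shows "size A = 6 \<and> (double_triangle A \<or> proj_equiv A six_std)"
proof (cases "\<exists>a\<in>#A. count A a = 1")
  case True
  then obtain a where "a \<in># A" "count A a = 1" by blast
  thus ?thesis using classify_simple[OF S R sz] by blast
next
  case False
  have nd: "nondegenerate A" using R unfolding rigid_def by simp
  show ?thesis using classify_nosimple[OF S nd sz] False by blast
qed

theorem proposition5p2:
  shows "(\<forall>A :: (real^3) set multiset.
            set_mset A \<subseteq> proj_points \<and> rigid A \<longrightarrow> size A \<ge> 6)
       \<and> (\<forall>A :: (real^3) set multiset.
            set_mset A \<subseteq> proj_points \<and> size A = 6 \<longrightarrow>
              (rigid A \<longleftrightarrow> double_triangle A \<or> proj_equiv A six_std))
       \<and> (\<forall>A B. double_triangle A \<and> double_triangle B \<longrightarrow> proj_equiv A B)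
       \<and> (\<forall>A. \<not> (double_triangle A \<and> proj_equiv A six_std))"
proof (intro conjI allI impI)
  fix A :: "(real^3) set multiset"
  assume h: "set_mset A \<subseteq> proj_points \<and> rigid A"
  show "size A \<ge> 6"
  proof (rule ccontr)
    assume "\<not> size A \<ge> 6"
    hence "size A \<le> 6" by simp
    thus False using classify[of A] h \<open>\<not> size A \<ge> 6\<close> by simp
  qed
next
  fix A :: "(real^3) set multiset"
  assume h: "set_mset A \<subseteq> proj_points \<and> size A = 6"
  show "rigid A \<longleftrightarrow> double_triangle A \<or> proj_equiv A six_std"
  proof
    assume "rigid A"
    thus "double_triangle A \<or> proj_equiv A six_std" using classify[of A] h by simp
  next
    assume "double_triangle A \<or> proj_equiv A six_std"
    thus "rigid A"
    proof
      assume "double_triangle A" thus "rigid A" by (rule dt_rigid)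
    next
      assume "proj_equiv A six_std"
      then obtain x y z where "span {x, y, z} = UNIV" "A = std6 x y z"
        using pe_std6_inv[OF pe_sym] by blast
      thus "rigid A" using std6_rigid by simp
    qed
  qed
next
  fix A B :: "(real^3) set multiset"
  assume "double_triangle A \<and> double_triangle B"
  thus "proj_equiv A B" using part3 by blast
next
  fix A :: "(real^3) set multiset"
  show "\<not> (double_triangle A \<and> proj_equiv A six_std)" by (rule part4)
qed


end
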